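(* Let $\alpha,\beta,\gamma\in I(d)$ with $\alpha\le\beta\le\gamma$. For every $m\ge1$, the map sending a nonvanishing skew-symmetric notched bitableau $(P,Q)$ on $\bar\beta\times\beta$ with rows $P_1,\dots,P_r$, $Q_1,\dots,Q_r$ to $f_{\theta_1,\beta}\cdots f_{\theta_r,\beta}$, where $\theta_i=P_i\cup(\beta\setminus Q_i)$, is a bijection from the set of degree-$2m$ nonvanishing skew-symmetric notched bitableaux on $\bar\beta\times\beta$ bounded by $T_\alpha,W_\gamma$ onto the set of degree-$m$ standard monomials on $Y^\gamma_{\alpha,\beta}$.
   Context: Notation: $m^*=2d+1-m$; $I(d)$ is the set of $d$-subsets of $\{1,\dots,2d\}$ containing exactly one of $m,m^*$ for each $m$ and having an even number of elements $>d$; $v\le w$ iff $v_i\le w_i$ for sorted entries; $\bar\beta=\{1,\dots,2d\}\setminus\beta$. For $\theta\in I(d)$ with $\theta\setminus\beta=\{r_1<\dots<r_{2s}\}$, $f_{\theta,\beta}$ is the Pfaffian of the skew-symmetric $2s\times2s$ matrix $N$ with $N_{ij}=X_{(r_i,r_j^* )}$ for $i<j$, an element of $P=k[X_{(r,c)}:r\notin\beta,c\in\beta,r<c^*]$; the $\beta$-degree of $\theta$ is $s$. A product $f_{\theta_1,\beta}\cdots f_{\theta_r,\beta}$ ($\theta_i\in I(d)$) is a standard monomial on $Y^\gamma_{\alpha,\beta}$ if $\alpha\le\theta_1\le\dots\le\theta_r\le\gamma$ and each $\theta_i$ satisfies $\theta_i<\beta$ or $\theta_i>\beta$; its degree is the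 sum of the $\beta$-degrees. $T_\alpha$ is any subset of $\bar\beta\times\beta$ whose set of first coordinates is $\alpha\setminus\beta$ and set of second coordinates is $\beta\setminus\alpha$ (each coordinate appearing once); $W_\gamma$ likewise with $\gamma\setminus\beta$, $\beta\setminus\gamma$. Notched bitableaux. A notched bitableau is a pair $(P,Q)$ of arrays of the same shape of finitely many left-justified rows (numbered from top) of positive integers; $P_i,Q_i$ the multisets of row $i$; degree = number of boxes of $P$. Write $A-B\le A'-B'$ if $|A^{\le z}|-|B^{\le z}|\ge|A'^{\le z}|-|B'^{\le z}|$ for all $z$; for $|A|=|B|$ with sorted elements $\lambda_j,\delta_j$, $A-B<\emptyset$ (resp. $>\emptyset$) means $\lambda_j<\delta_j$ (resp. $>$) for all $j$. Semistandard: rows strictly increasing and $P_i-Q_i\le P_{i+1}-Q_{i+1}$; nonvanishing: every row $<\emptyset$ or $>\emptyset$. Skew-symmetric: semistandard, even row lengths, and duality (dual of the entry in row $i$, column $j$ of $P$ (resp. $Q$) is the entry in row $i$, column $k_i+1-j$ of $Q$ (resp. $P$); $x<y\Rightarrow\mathrm{dual}(x)>\mathrm{dual}(y)$, $x=y\Rightarrow\mathrm{dual}(x)=\mathrm{dual}(y)$). On $\bar\beta\times\beta$: entries of $P$ in $\bar\beta$, of $Q$ in $\beta$, each entry plus its dual equal to $2d+1$. For finite $S\subseteq\mathbb N^2$, $S_{(1)},S_{(2)}$ are the multisets of coordinates. $(P,Q)$ with $r$ rows is bounded by $T,W$ if $T_{(1)}-T_{(2)}\le P_1-Q_1$ and $P_r-Q_r\le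 W_{(1)}-W_{(2)}$. *)

theory Defs
  imports Main "HOL-Library.Multiset"
begin

definition dualn :: "nat \<Rightarrow> nat \<Rightarrow> nat" where
  "dualn d m = 2*d + 1 - m"

definition Iset :: "nat \<Rightarrow> nat set set" where
  "Iset d = {\<theta>. \<theta> \<subseteq> {1..2*d} \<and> card \<theta> = d
      \<and> (\<forall>m\<in>{1..2*d}. (m \<in> \<theta>) \<noteq> (dualn d m \<in> \<theta>))
      \<and> even (card {x\<in>\<theta>. x > d})}"

definition Ile :: "nat set \<Rightarrow> nat set \<Rightarrow> bool" where
  "Ile v w \<longleftrightarrow> card v = card w \<and>
     (\<forall>i<card v. sorted_list_of_set v ! i \<le> sorted_list_of_set w ! i)"

definition Ilt :: "nat set \<Rightarrow> nat set \<Rightarrow> bool" where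
  "Ilt v w \<longleftrightarrow> Ile v w \<and> v \<noteq> w"

definition beta_degree :: "nat set \<Rightarrow> nat set \<Rightarrow> nat" where
  "beta_degree \<beta> \<theta> = card (\<theta> - \<beta>) div 2"

(* A standard monomial f_{theta_1,beta} ... f_{theta_r,beta} on Y^gamma_{alpha,beta},
   represented by its (formal) index sequence [theta_1, ..., theta_r] *)
definition std_monomial :: "nat \<Rightarrow> nat set \<Rightarrow> nat set \<Rightarrow> nat set \<Rightarrow> nat set list \<Rightarrow> bool" where
  "std_monomial d \<alpha> \<beta> \<gamma> \<theta>s \<longleftrightarrow>
     (\<forall>\<theta>\<in>set \<theta>s. \<theta> \<in> Iset d \<and> (Ilt \<theta> \<beta> \<or> Ilt \<beta> \<theta>))
     \<and> (\<forall>i. Suc i < length \<theta>s \<longrightarrow> Ile (\<theta>s ! i) (\<theta>s ! Suc i))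
     \<and> (\<theta>s \<noteq> [] \<longrightarrow> Ile \<alpha> (hd \<theta>s) \<and> Ile (last \<theta>s) \<gamma>)"

definition monomial_degree :: "nat set \<Rightarrow> nat set list \<Rightarrow> nat" where
  "monomial_degree \<beta> \<theta>s = sum_list (map (beta_degree \<beta>) \<theta>s)"

definition cnt_le :: "nat multiset \<Rightarrow> nat \<Rightarrow> int" where
  "cnt_le A z = int (size (filter_mset (\<lambda>x. x \<le> z) A))"

definition diff_le :: "nat multiset \<Rightarrow> nat multiset \<Rightarrow> nat multiset \<Rightarrow> nat multiset \<Rightarrow> bool" where
  "diff_le A B A' B' \<longleftrightarrow> (\<forall>z. cnt_le A z - cnt_le B z \<ge> cnt_le A' z - cnt_le B' z)"

definition diff_lt_empty :: "nat multiset \<Rightarrow> nat multiset \<Rightarrow> bool" where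
  "diff_lt_empty A B \<longleftrightarrow> size A = size B \<and>
     (\<forall>j<size A. sorted_list_of_multiset A ! j < sorted_list_of_multiset B ! j)"

definition diff_gt_empty :: "nat multiset \<Rightarrow> nat multiset \<Rightarrow> bool" where
  "diff_gt_empty A B \<longleftrightarrow> size A = size B \<and>
     (\<forall>j<size A. sorted_list_of_multiset A ! j > sorted_list_of_multiset B ! j)"

(* A notched bitableau (P,Q): P, Q are lists of rows (row i = P ! i), rows are
   left-justified lists of positive integers, nonempty, same shape *)
definition bitableau :: "nat list list \<Rightarrow> nat list list \<Rightarrow> bool" where
  "bitableau P Q \<longleftrightarrow> length P = length Q \<and>
     (\<forall>i<length P. length (P ! i) = length (Q ! i) \<and> P ! i \<noteq> []
        \<and> (\<forall>x\<in>set (P ! i). x > 0) \<and> (\<forall>x\<in>set (Q ! i). x > 0))"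

definition tab_degree :: "nat list list \<Rightarrow> nat" where
  "tab_degree P = sum_list (map length P)"

definition semistandard :: "nat list list \<Rightarrow> nat list list \<Rightarrow> bool" where
  "semistandard P Q \<longleftrightarrow> bitableau P Q \<and>
     (\<forall>i<length P. sorted_wrt (<) (P ! i) \<and> sorted_wrt (<) (Q ! i)) \<and>
     (\<forall>i. Suc i < length P \<longrightarrow>
        diff_le (mset (P ! i)) (mset (Q ! i)) (mset (P ! Suc i)) (mset (Q ! Suc i)))"

definition nonvanishing :: "nat list list \<Rightarrow> nat list list \<Rightarrow> bool" where
  "nonvanishing P Q \<longleftrightarrow> (\<forall>i<length P.
     diff_lt_empty (mset (P ! i)) (mset (Q ! i)) \<or> diff_gt_empty (mset (P ! i)) (mset (Q ! i)))"

(* boxes: (True,i,j) = row i column j of P, (False,i,j) = row i column j of Q (0-based) *)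
definition valid_box :: "nat list list \<Rightarrow> bool \<times> nat \<times> nat \<Rightarrow> bool" where
  "valid_box P b \<longleftrightarrow> (case b of (_, i, j) \<Rightarrow> i < length P \<and> j < length (P ! i))"

definition box_val :: "nat list list \<Rightarrow> nat list list \<Rightarrow> bool \<times> nat \<times> nat \<Rightarrow> nat" where
  "box_val P Q b = (case b of (s, i, j) \<Rightarrow> (if s then P else Q) ! i ! j)"

(* dual of entry in row i, column j of P (resp. Q) is entry in row i, column k_i+1-j of Q (resp. P) *)
definition box_dual :: "nat list list \<Rightarrow> nat list list \<Rightarrow> bool \<times> nat \<times> nat \<Rightarrow> nat" where
  "box_dual P Q b = (case b of (s, i, j) \<Rightarrow> (if s then Q else P) ! i ! (length (P ! i) - 1 - j))"

definition skew_symmetric :: "nat list list \<Rightarrow> nat list list \<Rightarrow> bool" where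
  "skew_symmetric P Q \<longleftrightarrow> semistandard P Q \<and>
     (\<forall>i<length P. even (length (P ! i))) \<and>
     (\<forall>x y. valid_box P x \<longrightarrow> valid_box P y \<longrightarrow>
        (box_val P Q x < box_val P Q y \<longrightarrow> box_dual P Q x > box_dual P Q y) \<and>
        (box_val P Q x = box_val P Q y \<longrightarrow> box_dual P Q x = box_dual P Q y))"

(* skew-symmetric on \<bar>\<beta> \<times> \<beta> (the skew-symmetry itself is required separately) *)
definition on_bbar_b :: "nat \<Rightarrow> nat set \<Rightarrow> nat list list \<Rightarrow> nat list list \<Rightarrow> bool" where
  "on_bbar_b d \<beta> P Q \<longleftrightarrow>
     (\<forall>i<length P. set (P ! i) \<subseteq> {1..2*d} - \<beta> \<and> set (Q ! i) \<subseteq> \<beta>) \<and>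
     (\<forall>x. valid_box P x \<longrightarrow> box_val P Q x + box_dual P Q x = 2*d + 1)"

definition coord1 :: "(nat \<times> nat) set \<Rightarrow> nat multiset" where
  "coord1 S = image_mset fst (mset_set S)"
definition coord2 :: "(nat \<times> nat) set \<Rightarrow> nat multiset" where
  "coord2 S = image_mset snd (mset_set S)"

definition bounded_by :: "(nat \<times> nat) set \<Rightarrow> (nat \<times> nat) set \<Rightarrow> nat list list \<Rightarrow> nat list list \<Rightarrow> bool" where
  "bounded_by T W P Q \<longleftrightarrow> P \<noteq> [] \<longrightarrow>
     diff_le (coord1 T) (coord2 T) (mset (hd P)) (mset (hd Q)) \<and>
     diff_le (mset (last P)) (mset (last Q)) (coord1 W) (coord2 W)"

(* T is an admissible T_alpha (and W an admissible W_gamma, with alpha := gamma):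
   subset of \<bar>\<beta> \<times> \<beta> with first coordinates alpha \ beta, second beta \ alpha, each once *)
definition is_T :: "nat \<Rightarrow> nat set \<Rightarrow> nat set \<Rightarrow> (nat \<times> nat) set \<Rightarrow> bool" where
  "is_T d \<beta> \<alpha> T \<longleftrightarrow> T \<subseteq> ({1..2*d} - \<beta>) \<times> \<beta> \<and> fst ` T = \<alpha> - \<beta> \<and> snd ` T = \<beta> - \<alpha>
     \<and> inj_on fst T \<and> inj_on snd T"

definition tab_to_monomial :: "nat set \<Rightarrow> nat list list \<times> nat list list \<Rightarrow> nat set list" where
  "tab_to_monomial \<beta> PQ = map (\<lambda>(p, q). set p \<union> (\<beta> - set q)) (zip (fst PQ) (snd PQ))"

end

theory Submission
  imports Defs
begin

definition cntS :: "nat set \<Rightarrow> nat \<Rightarrow> nat" where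
  "cntS S z = card {x\<in>S. x \<le> z}"

lemma sls_set: "sorted_wrt (<) (xs::nat list) \<Longrightarrow> sorted_list_of_set (set xs) = xs"
  by (metis finite_set set_sorted_list_of_set strict_sorted_equal strict_sorted_list_of_set)

lemma cnt_le_mset: "distinct p \<Longrightarrow> cnt_le (mset p) z = int (cntS (set p) z)"
proof -
  assume "distinct p"
  have "filter_mset (\<lambda>x. x \<le> z) (mset p) = mset (filter (\<lambda>x. x \<le> z) p)" by simp
  then have "size (filter_mset (\<lambda>x. x \<le> z) (mset p)) = length (filter (\<lambda>x. x \<le> z) p)" by (metis size_mset)
  also have "\<dots> = card (set (filter (\<lambda>x. x \<le> z) p))"
    using \<open>distinct p\<close> by (metis distinct_card distinct_filter)
  also have "set (filter (\<lambda>x. x \<le> z) p) = {x\<in>set p. x \<le> z}" by auto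
  finally show ?thesis unfolding cnt_le_def cntS_def by simp
qed

lemma cnt_le_mset_set: "finite A \<Longrightarrow> cnt_le (mset_set A) z = int (cntS A z)"
  unfolding cnt_le_def cntS_def by simp

lemma cnt_idx:
  assumes "sorted_wrt (<) (xs::nat list)"
  shows "card {x\<in>set xs. x \<le> z} = card {i. i < length xs \<and> xs!i \<le> z}"
proof -
  have d: "distinct xs" using assms strict_sorted_iff by blast
  have "{x\<in>set xs. x \<le> z} = (!) xs ` {i. i < length xs \<and> xs!i \<le> z}"
    by (auto simp: in_set_conv_nth)
  moreover have "inj_on ((!) xs) {i. i < length xs \<and> xs!i \<le> z}"
    using inj_on_nth[OF d] by auto
  ultimately show ?thesis by (simp add: card_image)
qed

lemma Ile_cnt:
  assumes fv: "finite v" and fw: "finite w" and c: "card v = card w"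
  shows "Ile v w \<longleftrightarrow> (\<forall>z. cntS w z \<le> cntS v z)"
proof -
  define xs where "xs = sorted_list_of_set v"
  define ys where "ys = sorted_list_of_set w"
  have sx: "sorted_wrt (<) xs" and sy: "sorted_wrt (<) ys"
    unfolding xs_def ys_def by (auto intro: strict_sorted_list_of_set)
  have setx: "set xs = v" and sety: "set ys = w" using fv fw unfolding xs_def ys_def by auto
  have lx: "length xs = card v" and ly: "length ys = card v"
    using c unfolding xs_def ys_def by auto
  have cx: "\<And>z. cntS v z = card {i. i < card v \<and> xs!i \<le> z}"
    unfolding cntS_def using cnt_idx[OF sx] setx lx by metis
  have cy: "\<And>z. cntS w z = card {i. i < card v \<and> ys!i \<le> z}"
    unfolding cntS_def using cnt_idx[OF sy] sety ly by metis
  have Ile_eq: "Ile v w \<longleftrightarrow> (\<forall>i<card v. xs!i \<le> ys!i)"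
    unfolding Ile_def xs_def ys_def using c by auto
  show ?thesis
  proof
    assume "Ile v w"
    then have h: "\<forall>i<card v. xs!i \<le> ys!i" using Ile_eq by blast
    show "\<forall>z. cntS w z \<le> cntS v z"
    proof
      fix z
      have "{i. i < card v \<and> ys!i \<le> z} \<subseteq> {i. i < card v \<and> xs!i \<le> z}"
        using h by force
      then show "cntS w z \<le> cntS v z" unfolding cx cy by (intro card_mono) auto
    qed
  next
    assume h: "\<forall>z. cntS w z \<le> cntS v z"
    show "Ile v w"
      unfolding Ile_eq
    proof (rule ccontr)
      assume "\<not> (\<forall>i<card v. xs!i \<le> ys!i)"
      then obtain i where i: "i < card v" "xs!i > ys!i" by force
      define z where "z = ys!i"
      have "{..i} \<subseteq> {j. j < card v \<and> ys!j \<le> z}"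
      proof
        fix j assume "j \<in> {..i}"
        then have "j \<le> i" by simp
        then have "ys!j \<le> ys!i"
          using sy i(1) ly by (metis le_less sorted_wrt_nth_less order_le_less_trans)
        then show "j \<in> {j. j < card v \<and> ys!j \<le> z}" using \<open>j \<le> i\<close> i(1) z_def by auto
      qed
      then have a: "Suc i \<le> cntS w z" unfolding cy
        by (metis card_atMost card_mono finite_Collect_conjI finite_Collect_less_nat)
      have "{j. j < card v \<and> xs!j \<le> z} \<subseteq> {..<i}"
      proof
        fix j assume "j \<in> {j. j < card v \<and> xs!j \<le> z}"
        then have j: "j < card v" "xs!j \<le> z" by auto
        show "j \<in> {..<i}"
        proof (rule ccontr)
          assume "j \<notin> {..<i}"
          then have "i \<le> j" by simp
          then have "xs!i \<le> xs!j"
            using sx j(1) lx by (metis le_less sorted_wrt_nth_less)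
          then show False using i(2) j(2) z_def by simp
        qed
      qed
      then have "cntS v z \<le> i" unfolding cx by (metis card_lessThan card_mono finite_lessThan)
      then show False using a h by (metis not_less_eq_eq order_trans)
    qed
  qed
qed

lemma cnt_split:
  assumes "finite B" "finite P" "P \<inter> B = {}" "Q \<subseteq> B"
  shows "int (cntS (P \<union> (B - Q)) z) = int (cntS B z) - int (cntS Q z) + int (cntS P z)"
proof -
  have fQ: "finite Q" using assms finite_subset by blast
  have e: "{x\<in>P \<union> (B - Q). x \<le> z} = {x\<in>P. x \<le> z} \<union> ({x\<in>B. x \<le> z} - {x\<in>Q. x \<le> z})" by auto
  have "card ({x\<in>P. x \<le> z} \<union> ({x\<in>B. x \<le> z} - {x\<in>Q. x \<le> z}))
        = card {x\<in>P. x \<le> z} + card ({x\<in>B. x \<le> z} - {x\<in>Q. x \<le> z})"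
    using assms by (intro card_Un_disjoint) auto
  moreover have "card ({x\<in>B. x \<le> z} - {x\<in>Q. x \<le> z}) = card {x\<in>B. x \<le> z} - card {x\<in>Q. x \<le> z}"
    using assms by (intro card_Diff_subset) auto
  moreover have "card {x\<in>Q. x \<le> z} \<le> card {x\<in>B. x \<le> z}"
    using assms by (intro card_mono) auto
  ultimately show ?thesis unfolding cntS_def e by simp
qed

lemma dual_dual: "x \<le> 2*d+1 \<Longrightarrow> dualn d (dualn d x) = x"
  unfolding dualn_def by simp

lemma Iset_props:
  assumes "B \<in> Iset d"
  shows "finite B" "B \<subseteq> {1..2*d}" "card B = d"
    "\<And>x. x \<in> {1..2*d} \<Longrightarrow> x \<notin> B \<Longrightarrow> dualn d x \<in> B"
    "\<And>x. x \<in> {1..2*d} \<Longrightarrow> x \<in> B \<Longrightarrow> dualn d x \<notin> B"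
    "even (card {x\<in>B. x > d})"
  using assms unfolding Iset_def by (auto intro: finite_subset)

lemma dual_range: "x \<in> {1..2*d} \<Longrightarrow> dualn d x \<in> {1..2*d}"
  unfolding dualn_def by auto

lemma dual_inj: "inj_on (dualn d) {1..2*d}"
  unfolding inj_on_def dualn_def by auto

lemma sls_dual:
  assumes "finite S" "S \<subseteq> {1..2*d}"
  shows "sorted_list_of_set (dualn d ` S) = rev (map (dualn d) (sorted_list_of_set S))"
proof -
  let ?l = "rev (map (dualn d) (sorted_list_of_set S))"
  have s: "sorted_wrt (<) (sorted_list_of_set S)" by (rule strict_sorted_list_of_set)
  have sS: "set (sorted_list_of_set S) = S" using assms by simp
  have "sorted_wrt (>) (map (dualn d) (sorted_list_of_set S))"
    unfolding sorted_wrt_map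
    by (rule sorted_wrt_mono_rel[OF _ s]) (use sS assms in \<open>auto simp: dualn_def\<close>)
  then have "sorted_wrt (<) ?l" by (simp add: sorted_wrt_rev)
  moreover have "set ?l = dualn d ` S" using sS by simp
  ultimately show ?thesis
    by (metis assms(1) finite_imageI set_sorted_list_of_set strict_sorted_equal strict_sorted_list_of_set)
qed

lemma parity_id:
  assumes "finite B" "P \<subseteq> {1..2*d}" "P \<inter> B = {}" "dualn d ` P \<subseteq> B"
  shows "int (card {x\<in>P \<union> (B - dualn d ` P). x > d})
     = int (card {x\<in>B. x > d}) - int (card {x\<in>P. x \<le> d}) + int (card {x\<in>P. x > d})"
proof -
  let ?D = "dualn d ` P"
  have fP: "finite P" using assms(2) finite_subset by blast
  have e: "{x\<in>P \<union> (B - ?D). x > d} = {x\<in>P. x > d} \<union> ({x\<in>B. x > d} - {x\<in>?D. x > d})" by auto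
  have "card ({x\<in>P. x > d} \<union> ({x\<in>B. x > d} - {x\<in>?D. x > d}))
        = card {x\<in>P. x > d} + card ({x\<in>B. x > d} - {x\<in>?D. x > d})"
    using assms fP by (intro card_Un_disjoint) auto
  moreover have "card ({x\<in>B. x > d} - {x\<in>?D. x > d}) = card {x\<in>B. x > d} - card {x\<in>?D. x > d}"
    using assms by (intro card_Diff_subset) (auto intro: finite_subset)
  moreover have "card {x\<in>?D. x > d} \<le> card {x\<in>B. x > d}"
    using assms by (intro card_mono) auto
  moreover have "{x\<in>?D. x > d} = dualn d ` {x\<in>P. x \<le> d}"
    using assms(2) by (auto simp: dualn_def image_iff)
  moreover have "card (dualn d ` {x\<in>P. x \<le> d}) = card {x\<in>P. x \<le> d}"
    using assms(2) by (intro card_image inj_on_subset[OF dual_inj]) auto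
  ultimately show ?thesis unfolding e by simp
qed

lemma row_Iset:
  assumes B: "B \<in> Iset d" and P: "P \<subseteq> {1..2*d} - B" and ev: "even (card P)"
  shows "P \<union> (B - dualn d ` P) \<in> Iset d"
proof -
  note Bp = Iset_props[OF B]
  have fP: "finite P" using P finite_subset by blast
  have DB: "dualn d ` P \<subseteq> B" using P Bp(4) by auto
  have cD: "card (dualn d ` P) = card P"
    using P by (intro card_image inj_on_subset[OF dual_inj]) auto
  have "card (P \<union> (B - dualn d ` P)) = card P + card (B - dualn d ` P)"
    using P fP Bp(1) by (intro card_Un_disjoint) auto
  moreover have "card (B - dualn d ` P) = card B - card (dualn d ` P)"
    using DB Bp(1) by (intro card_Diff_subset) (auto intro: finite_subset)
  moreover have "card (dualn d ` P) \<le> card B" using DB Bp(1) by (intro card_mono) auto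
  ultimately have card: "card (P \<union> (B - dualn d ` P)) = d" using cD Bp(3) by simp
  have one: "\<forall>m\<in>{1..2*d}. (m \<in> P \<union> (B - dualn d ` P)) \<noteq> (dualn d m \<in> P \<union> (B - dualn d ` P))"
  proof
    fix m assume m: "m \<in> {1..2*d}"
    have dm: "dualn d m \<in> {1..2*d}" using dual_range[OF m] .
    have dd: "dualn d (dualn d m) = m" using m by (intro dual_dual) auto
    have mD: "m \<in> dualn d ` P \<longleftrightarrow> dualn d m \<in> P"
    proof
      assume "m \<in> dualn d ` P" then obtain y where "y \<in> P" "m = dualn d y" by auto
      then show "dualn d m \<in> P" using P dual_dual[of y d] by auto
    next
      assume "dualn d m \<in> P" then show "m \<in> dualn d ` P" using dd by (metis image_eqI)
    qed
    have dmD: "dualn d m \<in> dualn d ` P \<longleftrightarrow> m \<in> P"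
    proof
      assume "dualn d m \<in> dualn d ` P"
      then obtain y where y: "y \<in> P" "dualn d m = dualn d y" by auto
      have "y \<in> {1..2*d}" using y(1) P by auto
      then have "m = y" using inj_onD[OF dual_inj y(2) m] by simp
      then show "m \<in> P" using y by simp
    qed auto
    show "(m \<in> P \<union> (B - dualn d ` P)) \<noteq> (dualn d m \<in> P \<union> (B - dualn d ` P))"
    proof (cases "m \<in> B")
      case True
      then have "m \<notin> P" "dualn d m \<notin> B" using P Bp(5)[OF m] by auto
      then show ?thesis using mD dmD True by auto
    next
      case False
      then have "dualn d m \<in> B" "dualn d m \<notin> P" using P Bp(4)[OF m] by auto
      then show ?thesis using mD dmD False by auto
    qed
  qed
  have pid: "int (card {x\<in>P \<union> (B - dualn d ` P). x > d})
     = int (card {x\<in>B. x > d}) - int (card {x\<in>P. x \<le> d}) + int (card {x\<in>P. x > d})"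
    using P DB Bp(1) by (intro parity_id) auto
  have cPs: "card P = card {x\<in>P. x \<le> d} + card {x\<in>P. x > d}"
    using fP by (subst card_Un_disjoint[symmetric]) (auto intro: arg_cong[where f=card])
  then have "even (card {x\<in>P \<union> (B - dualn d ` P). x > d})"
  proof -
    obtain k1 where k1: "card P = 2*k1" using ev by auto
    obtain k2 where k2: "card {x\<in>B. x > d} = 2*k2" using Bp(6) by auto
    have "int (card {x\<in>P \<union> (B - dualn d ` P). x > d}) = 2 * (int k2 + int k1 - int (card {x\<in>P. x \<le> d}))"
      using pid k1 k2 cPs by simp
    then have "even (int (card {x\<in>P \<union> (B - dualn d ` P). x > d}))" by simp
    then show ?thesis by simp
  qed
  then show ?thesis unfolding Iset_def using card one P Bp(2) by auto
qed

definition rowgood :: "nat \<Rightarrow> nat set \<Rightarrow> nat list \<Rightarrow> nat list \<Rightarrow> bool" where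
  "rowgood d B p q \<longleftrightarrow> sorted_wrt (<) p \<and> sorted_wrt (<) q \<and> length p = length q \<and> p \<noteq> []
     \<and> even (length p) \<and> set p \<subseteq> {1..2*d} - B \<and> set q = dualn d ` set p"

definition pf :: "nat set \<Rightarrow> nat set \<Rightarrow> nat list" where
  "pf B \<theta> = sorted_list_of_set (\<theta> - B)"
definition qf :: "nat set \<Rightarrow> nat set \<Rightarrow> nat list" where
  "qf B \<theta> = sorted_list_of_set (B - \<theta>)"

lemma conv_Iset:
  assumes B: "B \<in> Iset d" and th: "\<theta> \<in> Iset d"
  shows "B - \<theta> = dualn d ` (\<theta> - B)" "\<theta> = (\<theta> - B) \<union> (B - dualn d ` (\<theta> - B))"
    "even (card (\<theta> - B))"
proof -
  note Bp = Iset_props[OF B] and Tp = Iset_props[OF th]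
  show e1: "B - \<theta> = dualn d ` (\<theta> - B)"
  proof
    show "B - \<theta> \<subseteq> dualn d ` (\<theta> - B)"
    proof
      fix y assume y: "y \<in> B - \<theta>"
      then have yr: "y \<in> {1..2*d}" using Bp(2) by auto
      have "dualn d y \<in> \<theta>" using Tp(4)[OF yr] y by auto
      moreover have "dualn d y \<notin> B" using Bp(5)[OF yr] y by auto
      moreover have "y = dualn d (dualn d y)" using yr by (intro dual_dual[symmetric]) auto
      ultimately show "y \<in> dualn d ` (\<theta> - B)" by blast
    qed
  next
    show "dualn d ` (\<theta> - B) \<subseteq> B - \<theta>"
    proof
      fix y assume "y \<in> dualn d ` (\<theta> - B)"
      then obtain x where x: "x \<in> \<theta>" "x \<notin> B" "y = dualn d x" by auto
      then have xr: "x \<in> {1..2*d}" using Tp(2) by auto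
      show "y \<in> B - \<theta>" using Tp(5)[OF xr] Bp(4)[OF xr] x by auto
    qed
  qed
  show e2: "\<theta> = (\<theta> - B) \<union> (B - dualn d ` (\<theta> - B))" using e1[symmetric] by auto
  have pid: "int (card {x\<in>(\<theta> - B) \<union> (B - dualn d ` (\<theta> - B)). x > d})
     = int (card {x\<in>B. x > d}) - int (card {x\<in>\<theta> - B. x \<le> d}) + int (card {x\<in>\<theta> - B. x > d})"
    using Tp(2) Bp(1) e1 by (intro parity_id) auto
  have fP: "finite (\<theta> - B)" using Tp(1) by simp
  have cPs: "card (\<theta> - B) = card {x\<in>\<theta> - B. x \<le> d} + card {x\<in>\<theta> - B. x > d}"
    using fP Tp(1) by (subst card_Un_disjoint[symmetric]) (auto intro: arg_cong[where f=card])
  obtain k1 where k1: "card {x\<in>\<theta>. x > d} = 2*k1" using Tp(6) by auto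
  obtain k2 where k2: "card {x\<in>B. x > d} = 2*k2" using Bp(6) by auto
  have "int (card (\<theta> - B)) = 2 * (int k1 - int k2 + int (card {x\<in>\<theta> - B. x \<le> d}))"
    using pid k1 k2 cPs e2[symmetric] by simp
  then have "even (int (card (\<theta> - B)))" by simp
  then show "even (card (\<theta> - B))" by simp
qed

lemma rowgood_props:
  assumes B: "B \<in> Iset d" and rg: "rowgood d B p q"
  defines "\<theta> \<equiv> set p \<union> (B - set q)"
  shows "\<theta> \<in> Iset d" "\<theta> - B = set p" "B - \<theta> = set q" "pf B \<theta> = p" "qf B \<theta> = q"
    "set q \<subseteq> B" "q = rev (map (dualn d) p)" "set p \<inter> B = {}" "card \<theta> = d" "\<theta> \<noteq> B"
proof -
  note Bp = Iset_props[OF B]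
  have sp: "sorted_wrt (<) p" and sq: "sorted_wrt (<) q" and pr: "set p \<subseteq> {1..2*d} - B"
    and qd: "set q = dualn d ` set p" and ev: "even (length p)" and ne: "p \<noteq> []"
    using rg unfolding rowgood_def by auto
  have dp: "distinct p" using sp strict_sorted_iff by blast
  show qB: "set q \<subseteq> B" using qd pr Bp(4) by auto
  show "\<theta> \<in> Iset d" unfolding \<theta>_def qd using row_Iset[OF B pr] ev distinct_card[OF dp] by simp
  show pB: "set p \<inter> B = {}" using pr by auto
  show tB: "\<theta> - B = set p" unfolding \<theta>_def using pB by auto
  show Bt: "B - \<theta> = set q" unfolding \<theta>_def using pB qB by auto
  show "pf B \<theta> = p" unfolding pf_def tB using sls_set[OF sp] .
  show "qf B \<theta> = q" unfolding qf_def Bt using sls_set[OF sq] .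
  show "q = rev (map (dualn d) p)"
    using sls_dual[of "set p" d] pr sls_set[OF sp] sls_set[OF sq] qd by auto
  show "\<theta> \<noteq> B" using tB ne by auto
  show "card \<theta> = d" using \<open>\<theta> \<in> Iset d\<close> Iset_props(3) by blast
qed

lemma rowgood_from_Iset:
  assumes B: "B \<in> Iset d" and th: "\<theta> \<in> Iset d" and ne: "\<theta> \<noteq> B"
  shows "rowgood d B (pf B \<theta>) (qf B \<theta>)" "\<theta> = set (pf B \<theta>) \<union> (B - set (qf B \<theta>))"
proof -
  note Bp = Iset_props[OF B] and Tp = Iset_props[OF th]
  note c = conv_Iset[OF B th]
  have f1: "finite (\<theta> - B)" "finite (B - \<theta>)" using Tp(1) Bp(1) by auto
  have s1: "set (pf B \<theta>) = \<theta> - B" "set (qf B \<theta>) = B - \<theta>" unfolding pf_def qf_def using f1 by auto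
  have cc: "card (B - \<theta>) = card (\<theta> - B)" unfolding c(1)
    using Tp(2) by (intro card_image inj_on_subset[OF dual_inj]) auto
  have "\<theta> - B \<noteq> {}"
  proof
    assume "\<theta> - B = {}"
    then have "\<theta> \<subseteq> B" by auto
    then show False using ne Bp Tp by (metis card_subset_eq)
  qed
  then show "rowgood d B (pf B \<theta>) (qf B \<theta>)" unfolding rowgood_def
    using s1 c(1) c(3) cc Tp(2) f1 by (auto simp: pf_def qf_def strict_sorted_list_of_set)
  show "\<theta> = set (pf B \<theta>) \<union> (B - set (qf B \<theta>))" using s1 by auto
qed

lemma cnt_decomp:
  assumes "finite X" "finite B"
  shows "int (cntS X z) = int (cntS B z) - int (cntS (B - X) z) + int (cntS (X - B) z)"
proof -
  have "X = (X - B) \<union> (B - (B - X))" by auto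
  then show ?thesis using cnt_split[of B "X - B" "B - X" z] assms by auto
qed

lemma Ile_diff:
  assumes "finite X" "finite Y" "finite B" "card X = card Y"
  shows "Ile X Y \<longleftrightarrow> (\<forall>z. int (cntS (X - B) z) - int (cntS (B - X) z) \<ge> int (cntS (Y - B) z) - int (cntS (B - Y) z))"
proof -
  have "Ile X Y \<longleftrightarrow> (\<forall>z. cntS Y z \<le> cntS X z)" using Ile_cnt assms by blast
  also have "\<dots> \<longleftrightarrow> (\<forall>z. int (cntS (X - B) z) - int (cntS (B - X) z) \<ge> int (cntS (Y - B) z) - int (cntS (B - Y) z))"
  proof -
    have "\<And>z. cntS Y z \<le> cntS X z \<longleftrightarrow> int (cntS Y z) \<le> int (cntS X z)" by simp
    then show ?thesis using cnt_decomp[OF assms(1,3)] cnt_decomp[OF assms(2,3)] by (smt (verit))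
  qed
  finally show ?thesis .
qed

lemma cnt_mset_row:
  assumes "sorted_wrt (<) p" shows "cnt_le (mset p) z = int (cntS (set p) z)"
  using cnt_le_mset assms strict_sorted_iff by blast

lemma coordT:
  assumes B: "B \<in> Iset d" and T: "is_T d B \<alpha> T"
  shows "coord1 T = mset_set (\<alpha> - B)" "coord2 T = mset_set (B - \<alpha>)"
proof -
  note Bp = Iset_props[OF B]
  have fT: "finite T" using T Bp(1) unfolding is_T_def
    by (meson finite_SigmaI finite_atLeastAtMost finite_Diff finite_subset)
  show "coord1 T = mset_set (\<alpha> - B)" unfolding coord1_def
    using image_mset_mset_set[of fst T] T unfolding is_T_def by simp
  show "coord2 T = mset_set (B - \<alpha>)" unfolding coord2_def
    using image_mset_mset_set[of snd T] T unfolding is_T_def by simp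
qed

lemma diff_le_row_row:
  assumes B: "B \<in> Iset d" and r1: "rowgood d B p1 q1" and r2: "rowgood d B p2 q2"
  shows "Ile (set p1 \<union> (B - set q1)) (set p2 \<union> (B - set q2)) \<longleftrightarrow> diff_le (mset p1) (mset q1) (mset p2) (mset q2)"
proof -
  note a = rowgood_props[OF B r1] and b = rowgood_props[OF B r2]
  have s: "sorted_wrt (<) p1" "sorted_wrt (<) q1" "sorted_wrt (<) p2" "sorted_wrt (<) q2"
    using r1 r2 unfolding rowgood_def by auto
  show ?thesis
    unfolding diff_le_def cnt_mset_row[OF s(1)] cnt_mset_row[OF s(2)] cnt_mset_row[OF s(3)] cnt_mset_row[OF s(4)]
    using Ile_diff[of "set p1 \<union> (B - set q1)" "set p2 \<union> (B - set q2)" B] a b Iset_props(1)[OF B]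
    by simp
qed

lemma diff_le_lower:
  assumes B: "B \<in> Iset d" and A: "\<alpha> \<in> Iset d" and T: "is_T d B \<alpha> T" and r: "rowgood d B p q"
  shows "Ile \<alpha> (set p \<union> (B - set q)) \<longleftrightarrow> diff_le (coord1 T) (coord2 T) (mset p) (mset q)"
proof -
  note a = rowgood_props[OF B r]
  have s: "sorted_wrt (<) p" "sorted_wrt (<) q" using r unfolding rowgood_def by auto
  have fA: "finite \<alpha>" "card \<alpha> = d" using Iset_props[OF A] by auto
  show ?thesis
    unfolding diff_le_def cnt_mset_row[OF s(1)] cnt_mset_row[OF s(2)] coordT[OF B T]
      cnt_le_mset_set[OF finite_Diff[OF fA(1)]] cnt_le_mset_set[OF finite_Diff[OF Iset_props(1)[OF B]]]
    using Ile_diff[of \<alpha> "set p \<union> (B - set q)" B] a fA Iset_props(1)[OF B]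
    by simp
qed

lemma diff_le_upper:
  assumes B: "B \<in> Iset d" and A: "\<gamma> \<in> Iset d" and T: "is_T d B \<gamma> W" and r: "rowgood d B p q"
  shows "Ile (set p \<union> (B - set q)) \<gamma> \<longleftrightarrow> diff_le (mset p) (mset q) (coord1 W) (coord2 W)"
proof -
  note a = rowgood_props[OF B r]
  have s: "sorted_wrt (<) p" "sorted_wrt (<) q" using r unfolding rowgood_def by auto
  have fA: "finite \<gamma>" "card \<gamma> = d" using Iset_props[OF A] by auto
  show ?thesis
    unfolding diff_le_def cnt_mset_row[OF s(1)] cnt_mset_row[OF s(2)] coordT[OF B T]
      cnt_le_mset_set[OF finite_Diff[OF fA(1)]] cnt_le_mset_set[OF finite_Diff[OF Iset_props(1)[OF B]]]
    using Ile_diff[of "set p \<union> (B - set q)" \<gamma> B] a fA Iset_props(1)[OF B]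
    by simp
qed

lemma sorted_lists_le:
  assumes "sorted_wrt (<) (p::nat list)" "sorted_wrt (<) q" "length p = length q"
  shows "Ile (set p) (set q) \<longleftrightarrow> (\<forall>j<length p. p!j \<le> q!j)"
  using assms sls_set[OF assms(1)] sls_set[OF assms(2)] distinct_card strict_sorted_iff
  unfolding Ile_def by metis

lemma aux_int:
  assumes "int (a::nat) = int b - int c + int e"
  shows "(b \<le> a \<longleftrightarrow> c \<le> e)" "(a \<le> b \<longleftrightarrow> e \<le> c)"
proof -
  have "(int b \<le> int a \<longleftrightarrow> int c \<le> int e)" "(int a \<le> int b \<longleftrightarrow> int e \<le> int c)" using assms by linarith+
  then show "(b \<le> a \<longleftrightarrow> c \<le> e)" "(a \<le> b \<longleftrightarrow> e \<le> c)" by simp_all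
qed

lemma nonvan_row:
  assumes B: "B \<in> Iset d" and r: "rowgood d B p q"
  shows "Ilt (set p \<union> (B - set q)) B \<longleftrightarrow> diff_lt_empty (mset p) (mset q)"
    "Ilt B (set p \<union> (B - set q)) \<longleftrightarrow> diff_gt_empty (mset p) (mset q)"
proof -
  note a = rowgood_props[OF B r]
  note Bp = Iset_props[OF B]
  let ?t = "set p \<union> (B - set q)"
  have s: "sorted_wrt (<) p" "sorted_wrt (<) q" and l: "length p = length q" using r unfolding rowgood_def by auto
  have srt: "sort p = p" "sort q = q" using s by (simp_all add: sorted_sort_id strict_sorted_imp_sorted)
  have lt: "diff_lt_empty (mset p) (mset q) \<longleftrightarrow> (\<forall>j<length p. p!j < q!j)"
    unfolding diff_lt_empty_def using srt l by simp
  have gt: "diff_gt_empty (mset p) (mset q) \<longleftrightarrow> (\<forall>j<length p. p!j > q!j)"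
    unfolding diff_gt_empty_def using srt l by simp
  have ne: "\<And>j. j < length p \<Longrightarrow> p!j \<noteq> q!j"
  proof
    fix j assume j: "j < length p" "p!j = q!j"
    have "p!j \<in> set p" using j(1) by (rule nth_mem)
    moreover have "q!j \<in> set q" using j(1) l by simp
    ultimately show False using a(6) a(8) j(2) by auto
  qed
  have cnts: "\<And>z. int (cntS ?t z) = int (cntS B z) - int (cntS (set q) z) + int (cntS (set p) z)"
    using cnt_split[of B "set p" "set q"] a(6) a(8) Bp(1) by auto
  have cpq: "card (set p) = card (set q)" using s l distinct_card strict_sorted_iff by metis
  have ft: "finite ?t" using Bp(1) by simp
  have "Ilt ?t B \<longleftrightarrow> Ile ?t B" unfolding Ilt_def using a(10) by simp
  also have "\<dots> \<longleftrightarrow> (\<forall>z. cntS B z \<le> cntS ?t z)" using Ile_cnt[OF ft Bp(1)] a(9) Bp(3) by simp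
  also have "\<dots> \<longleftrightarrow> (\<forall>z. cntS (set q) z \<le> cntS (set p) z)" using aux_int(1)[OF cnts] by simp
  also have "\<dots> \<longleftrightarrow> Ile (set p) (set q)" using Ile_cnt[of "set p" "set q"] cpq by simp
  also have "\<dots> \<longleftrightarrow> (\<forall>j<length p. p!j \<le> q!j)" using sorted_lists_le[OF s l] .
  also have "\<dots> \<longleftrightarrow> (\<forall>j<length p. p!j < q!j)" using ne by (auto simp: le_less)
  finally show "Ilt ?t B \<longleftrightarrow> diff_lt_empty (mset p) (mset q)" using lt by simp
  have "Ilt B ?t \<longleftrightarrow> Ile B ?t" unfolding Ilt_def using a(10) by auto
  also have "\<dots> \<longleftrightarrow> (\<forall>z. cntS ?t z \<le> cntS B z)" using Ile_cnt[OF Bp(1) ft] a(9) Bp(3) by simp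
  also have "\<dots> \<longleftrightarrow> (\<forall>z. cntS (set p) z \<le> cntS (set q) z)" using aux_int(2)[OF cnts] by simp
  also have "\<dots> \<longleftrightarrow> Ile (set q) (set p)" using Ile_cnt[of "set q" "set p"] cpq by simp
  also have "\<dots> \<longleftrightarrow> (\<forall>j<length p. q!j \<le> p!j)" using sorted_lists_le[OF s(2,1) l[symmetric]] l by simp
  also have "\<dots> \<longleftrightarrow> (\<forall>j<length p. p!j > q!j)" using ne by (metis le_less)
  finally show "Ilt B ?t \<longleftrightarrow> diff_gt_empty (mset p) (mset q)" using gt by simp
qed

definition allgood :: "nat \<Rightarrow> nat set \<Rightarrow> nat list list \<Rightarrow> nat list list \<Rightarrow> bool" where
  "allgood d B P Q \<longleftrightarrow> length P = length Q \<and> (\<forall>i<length P. rowgood d B (P!i) (Q!i))"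

lemma tab_len: "length P = length Q \<Longrightarrow> length (tab_to_monomial B (P, Q)) = length P"
  unfolding tab_to_monomial_def by simp

lemma tab_nth: "length P = length Q \<Longrightarrow> i < length P \<Longrightarrow>
   tab_to_monomial B (P, Q) ! i = set (P!i) \<union> (B - set (Q!i))"
  unfolding tab_to_monomial_def by simp

lemma BD:
  assumes B: "B \<in> Iset d" and ag: "allgood d B P Q" and v: "valid_box P x"
  shows "box_dual P Q x = dualn d (box_val P Q x)" "box_val P Q x \<in> {1..2*d}"
proof -
  obtain s i j where x: "x = (s, i, j)" by (cases x) auto
  have i: "i < length P" and j: "j < length (P!i)" using v x unfolding valid_box_def by auto
  have rg: "rowgood d B (P!i) (Q!i)" using ag i unfolding allgood_def by auto
  note rp = rowgood_props[OF B rg]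
  have pr: "set (P!i) \<subseteq> {1..2*d}" using rg unfolding rowgood_def by auto
  let ?k = "length (P!i)"
  have kj: "?k - 1 - j < ?k" using j by simp
  have qn: "\<And>j'. j' < ?k \<Longrightarrow> Q!i!j' = dualn d (P!i!(?k - Suc j'))"
  proof -
    fix j' assume j': "j' < ?k"
    then have "?k - Suc j' < ?k" by simp
    then show "Q!i!j' = dualn d (P!i!(?k - Suc j'))" using rp(7) j' by (simp add: rev_nth)
  qed
  have pj: "P!i!j \<in> {1..2*d}" using subsetD[OF pr nth_mem[OF j]] .
  have "?k - Suc j < ?k" using j by simp
  then have pj2: "P!i!(?k - Suc j) \<in> {1..2*d}" by (rule subsetD[OF pr nth_mem])
  show "box_dual P Q x = dualn d (box_val P Q x)"
  proof (cases s)
    case True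
    have "?k - Suc (?k - 1 - j) = j" using j by simp
    then show ?thesis using True x qn[OF kj] unfolding box_dual_def box_val_def by simp
  next
    case False
    have "?k - 1 - j = ?k - Suc j" by simp
    then show ?thesis using False x qn[OF j] dual_dual[of "P!i!(?k - Suc j)" d] pj2
      unfolding box_dual_def box_val_def by simp
  qed
  show "box_val P Q x \<in> {1..2*d}"
  proof (cases s)
    case True then show ?thesis using x pj unfolding box_val_def by simp
  next
    case False then show ?thesis using x qn[OF j] dual_range[OF pj2] unfolding box_val_def by simp
  qed
qed

lemma dom_allgood:
  assumes B: "B \<in> Iset d" and sk: "skew_symmetric P Q" and ob: "on_bbar_b d B P Q"
  shows "allgood d B P Q"
  unfolding allgood_def
proof (intro conjI allI impI)
  have ss: "semistandard P Q" using conjunct1[OF sk[unfolded skew_symmetric_def]] .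
  then have bt: "bitableau P Q" using conjunct1[OF ss[unfolded semistandard_def]] by simp
  show l: "length P = length Q" using bt unfolding bitableau_def by auto
  fix i assume i: "i < length P"
  let ?p = "P!i" and ?q = "Q!i"
  let ?k = "length ?p"
  have lq: "length ?q = ?k" and ne: "?p \<noteq> []" using bt i unfolding bitableau_def by auto
  have sp: "sorted_wrt (<) ?p" "sorted_wrt (<) ?q" using conjunct1[OF conjunct2[OF ss[unfolded semistandard_def]]] i by simp_all
  have ev: "even ?k" using conjunct1[OF conjunct2[OF sk[unfolded skew_symmetric_def]]] i by simp
  have ps: "set ?p \<subseteq> {1..2*d} - B" using conjunct1[OF ob[unfolded on_bbar_b_def]] i by simp
  have pair: "\<And>j. j < ?k \<Longrightarrow> ?p!j + ?q!(?k - 1 - j) = 2*d+1"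
  proof -
    fix j assume j: "j < ?k"
    have "valid_box P (True, i, j)" using i j unfolding valid_box_def by simp
    then have "box_val P Q (True, i, j) + box_dual P Q (True, i, j) = 2*d+1"
      using conjunct2[OF ob[unfolded on_bbar_b_def]] by simp
    then show "?p!j + ?q!(?k - 1 - j) = 2*d+1" by (simp add: box_val_def box_dual_def)
  qed
  have "set ?q = dualn d ` set ?p"
  proof
    show "set ?q \<subseteq> dualn d ` set ?p"
    proof
      fix y assume "y \<in> set ?q"
      then obtain j' where j': "j' < ?k" "y = ?q!j'" using lq by (auto simp: in_set_conv_nth)
      let ?j = "?k - 1 - j'"
      have jj: "?j < ?k" "?k - 1 - ?j = j'" using j' by auto
      have "?p!?j + y = 2*d+1" using pair[OF jj(1)] jj(2) j'(2) by simp
      then have "y = dualn d (?p!?j)" unfolding dualn_def by simp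
      then show "y \<in> dualn d ` set ?p" using jj(1) by auto
    qed
  next
    show "dualn d ` set ?p \<subseteq> set ?q"
    proof
      fix y assume "y \<in> dualn d ` set ?p"
      then obtain j where j: "j < ?k" "y = dualn d (?p!j)" by (auto simp: in_set_conv_nth)
      have "y = ?q!(?k - 1 - j)" using pair[OF j(1)] j(2) unfolding dualn_def by simp
      then show "y \<in> set ?q" using j(1) lq by simp
    qed
  qed
  then show "rowgood d B ?p ?q" unfolding rowgood_def
    apply (intro conjI)
    using sp lq ne ev ps by simp_all
qed

lemma bitab_ag: "allgood d B P Q \<Longrightarrow> bitableau P Q"
  unfolding bitableau_def
proof (intro conjI allI impI)
  assume ag: "allgood d B P Q"
  then show "length P = length Q" unfolding allgood_def by simp
  fix i assume i: "i < length P"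
  then have rg: "rowgood d B (P!i) (Q!i)" using ag unfolding allgood_def by simp
  then show "length (P!i) = length (Q!i)" "P!i \<noteq> []" "\<forall>x\<in>set (P!i). 0 < x"
    unfolding rowgood_def by auto
  have "set (Q!i) \<subseteq> {1..2*d}"
  proof
    fix y assume "y \<in> set (Q!i)"
    then obtain x where "x \<in> set (P!i)" "y = dualn d x" using rg unfolding rowgood_def by auto
    moreover have "x \<in> {1..2*d}" using calculation(1) rg unfolding rowgood_def by auto
    ultimately show "y \<in> {1..2*d}" using dual_range by simp
  qed
  then show "\<forall>x\<in>set (Q!i). 0 < x" by auto
qed

lemma dual_anti: "a \<in> {1..2*d} \<Longrightarrow> b \<in> {1..2*d} \<Longrightarrow> a < b \<Longrightarrow> dualn d b < dualn d a"
  unfolding dualn_def by simp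

lemma triv3: "E \<Longrightarrow> D \<Longrightarrow> (S \<and> E \<and> D) = S" by blast

lemma char:
  assumes B: "B \<in> Iset d" and A: "\<alpha> \<in> Iset d" and G: "\<gamma> \<in> Iset d"
    and T: "is_T d B \<alpha> T" and W: "is_T d B \<gamma> W" and ag: "allgood d B P Q"
  defines "\<theta>s \<equiv> tab_to_monomial B (P, Q)"
  shows "nonvanishing P Q \<longleftrightarrow> (\<forall>\<theta>\<in>set \<theta>s. Ilt \<theta> B \<or> Ilt B \<theta>)"
    "skew_symmetric P Q \<longleftrightarrow> (\<forall>i. Suc i < length \<theta>s \<longrightarrow> Ile (\<theta>s!i) (\<theta>s!Suc i))"
    "on_bbar_b d B P Q"
    "bounded_by T W P Q \<longleftrightarrow> (\<theta>s \<noteq> [] \<longrightarrow> Ile \<alpha> (hd \<theta>s) \<and> Ile (last \<theta>s) \<gamma>)"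
    "tab_degree P = 2 * monomial_degree B \<theta>s"
    "\<forall>\<theta>\<in>set \<theta>s. \<theta> \<in> Iset d"
    "map (pf B) \<theta>s = P" "map (qf B) \<theta>s = Q"
proof -
  have l: "length P = length Q" and rg: "\<And>i. i < length P \<Longrightarrow> rowgood d B (P!i) (Q!i)"
    using ag unfolding allgood_def by auto
  have lt: "length \<theta>s = length P" unfolding \<theta>s_def using tab_len[OF l] .
  have nt: "\<And>i. i < length P \<Longrightarrow> \<theta>s!i = set (P!i) \<union> (B - set (Q!i))"
    unfolding \<theta>s_def using tab_nth[OF l] by blast
  show "nonvanishing P Q \<longleftrightarrow> (\<forall>\<theta>\<in>set \<theta>s. Ilt \<theta> B \<or> Ilt B \<theta>)"
    unfolding nonvanishing_def all_set_conv_all_nth lt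
    using nonvan_row[OF B rg] nt by simp
  show "\<forall>\<theta>\<in>set \<theta>s. \<theta> \<in> Iset d"
    unfolding all_set_conv_all_nth lt using rowgood_props(1)[OF B rg] nt by simp
  show "map (pf B) \<theta>s = P"
    by (rule nth_equalityI) (simp_all add: lt nt rowgood_props(4)[OF B rg])
  show "map (qf B) \<theta>s = Q"
    by (rule nth_equalityI) (simp_all add: lt l nt rowgood_props(5)[OF B rg])
  have ss_eq: "semistandard P Q \<longleftrightarrow> (\<forall>i. Suc i < length P \<longrightarrow>
        diff_le (mset (P ! i)) (mset (Q ! i)) (mset (P ! Suc i)) (mset (Q ! Suc i)))"
    unfolding semistandard_def using bitab_ag[OF ag] rg unfolding rowgood_def by auto
  have ev: "\<forall>i<length P. even (length (P ! i))"
  proof (intro allI impI)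
    fix i assume "i < length P"
    from rg[OF this] show "even (length (P ! i))" unfolding rowgood_def by (elim conjE)
  qed
  have du: "\<forall>x y. valid_box P x \<longrightarrow> valid_box P y \<longrightarrow>
        (box_val P Q x < box_val P Q y \<longrightarrow> box_dual P Q x > box_dual P Q y) \<and>
        (box_val P Q x = box_val P Q y \<longrightarrow> box_dual P Q x = box_dual P Q y)"
  proof (intro allI impI)
    fix x y assume x: "valid_box P x" and y: "valid_box P y"
    note bx = BD[OF B ag x] and by' = BD[OF B ag y]
    show "(box_val P Q x < box_val P Q y \<longrightarrow> box_dual P Q x > box_dual P Q y) \<and>
        (box_val P Q x = box_val P Q y \<longrightarrow> box_dual P Q x = box_dual P Q y)"
      unfolding bx(1) by'(1) using dual_anti[OF bx(2) by'(2)] by simp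
  qed
  show "skew_symmetric P Q \<longleftrightarrow> (\<forall>i. Suc i < length \<theta>s \<longrightarrow> Ile (\<theta>s!i) (\<theta>s!Suc i))"
  proof -
    have "skew_symmetric P Q \<longleftrightarrow> semistandard P Q"
      unfolding skew_symmetric_def by (rule triv3[OF ev du])
    moreover have ch: "\<And>i. Suc i < length P \<Longrightarrow>
       diff_le (mset (P ! i)) (mset (Q ! i)) (mset (P ! Suc i)) (mset (Q ! Suc i)) \<longleftrightarrow> Ile (\<theta>s!i) (\<theta>s!Suc i)"
    proof -
      fix i assume si: "Suc i < length P"
      then have ii: "i < length P" by simp
      show "diff_le (mset (P ! i)) (mset (Q ! i)) (mset (P ! Suc i)) (mset (Q ! Suc i)) \<longleftrightarrow> Ile (\<theta>s!i) (\<theta>s!Suc i)"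
        unfolding nt[OF ii] nt[OF si] using diff_le_row_row[OF B rg[OF ii] rg[OF si]] by simp
    qed
    ultimately show ?thesis using ss_eq lt by (simp add: ch)
  qed
  show "on_bbar_b d B P Q"
    unfolding on_bbar_b_def
  proof (intro conjI allI impI)
    fix i assume i: "i < length P"
    show "set (P!i) \<subseteq> {1..2*d} - B" using rg[OF i] unfolding rowgood_def by simp
    show "set (Q!i) \<subseteq> B" using rowgood_props(6)[OF B rg[OF i]] .
  next
    fix x assume x: "valid_box P x"
    show "box_val P Q x + box_dual P Q x = 2*d+1"
      using BD[OF B ag x] unfolding dualn_def by simp
  qed
  show "bounded_by T W P Q \<longleftrightarrow> (\<theta>s \<noteq> [] \<longrightarrow> Ile \<alpha> (hd \<theta>s) \<and> Ile (last \<theta>s) \<gamma>)"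
  proof (cases "P = []")
    case True
    then have "\<theta>s = []" using lt by simp
    then show ?thesis using True unfolding bounded_by_def by simp
  next
    case False
    then have ne: "\<theta>s \<noteq> []" "Q \<noteq> []" using lt l by auto
    have z: "0 < length P" using False by simp
    have z2: "length P - 1 < length P" using False by simp
    have "hd \<theta>s = set (P!0) \<union> (B - set (Q!0))" using nt[OF z] ne by (simp add: hd_conv_nth)
    moreover have "last \<theta>s = set (P!(length P - 1)) \<union> (B - set (Q!(length P - 1)))"
      using nt[OF z2] ne lt by (simp add: last_conv_nth)
    moreover have "hd P = P!0" "hd Q = Q!0" using False ne by (simp_all add: hd_conv_nth)
    moreover have "last P = P!(length P - 1)" "last Q = Q!(length P - 1)"
      using False ne l by (simp_all add: last_conv_nth)
    ultimately show ?thesis unfolding bounded_by_def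
      using diff_le_lower[OF B A T rg[OF z]] diff_le_upper[OF B G W rg[OF z2]] ne False by simp
  qed
  have len2: "\<And>i. i < length P \<Longrightarrow> length (P!i) = 2 * beta_degree B (\<theta>s!i)"
  proof -
    fix i assume i: "i < length P"
    have "\<theta>s!i - B = set (P!i)" using rowgood_props(2)[OF B rg[OF i]] nt[OF i] by simp
    moreover have "card (set (P!i)) = length (P!i)"
      using rg[OF i] unfolding rowgood_def by (metis distinct_card strict_sorted_iff)
    moreover have "even (length (P!i))" using rg[OF i] unfolding rowgood_def by (elim conjE)
    ultimately show "length (P!i) = 2 * beta_degree B (\<theta>s!i)" unfolding beta_degree_def by simp
  qed
  have "tab_degree P = (\<Sum>i = 0..<length P. length (P!i))"
    unfolding tab_degree_def by (simp add: sum_list_sum_nth)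
  also have "\<dots> = (\<Sum>i = 0..<length P. 2 * beta_degree B (\<theta>s!i))"
    using len2 by (intro sum.cong) auto
  also have "\<dots> = 2 * monomial_degree B \<theta>s"
    unfolding monomial_degree_def by (simp add: sum_list_sum_nth lt sum_distrib_left)
  finally show "tab_degree P = 2 * monomial_degree B \<theta>s" .
qed

lemma cod_good:
  assumes B: "B \<in> Iset d" and th: "\<forall>\<theta>\<in>set \<theta>s. \<theta> \<in> Iset d \<and> (Ilt \<theta> B \<or> Ilt B \<theta>)"
  shows "allgood d B (map (pf B) \<theta>s) (map (qf B) \<theta>s)"
    "tab_to_monomial B (map (pf B) \<theta>s, map (qf B) \<theta>s) = \<theta>s"
proof -
  have g: "\<And>i. i < length \<theta>s \<Longrightarrow> \<theta>s!i \<in> Iset d \<and> \<theta>s!i \<noteq> B"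
    using th unfolding Ilt_def by (metis nth_mem)
  show "allgood d B (map (pf B) \<theta>s) (map (qf B) \<theta>s)"
    unfolding allgood_def using rowgood_from_Iset(1)[OF B] g by simp
  show "tab_to_monomial B (map (pf B) \<theta>s, map (qf B) \<theta>s) = \<theta>s"
    by (rule nth_equalityI) (use rowgood_from_Iset(2)[OF B] g in \<open>simp_all add: tab_len tab_nth\<close>)
qed

theorem lemma8p2:
  fixes d m :: nat and \<alpha> \<beta> \<gamma> :: "nat set" and T W :: "(nat \<times> nat) set"
  assumes "\<alpha> \<in> Iset d" and "\<beta> \<in> Iset d" and "\<gamma> \<in> Iset d"
    and "Ile \<alpha> \<beta>" and "Ile \<beta> \<gamma>"
    and "is_T d \<beta> \<alpha> T" and "is_T d \<beta> \<gamma> W"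
    and "m \<ge> 1"
  shows "bij_betw (tab_to_monomial \<beta>)
    {(P, Q). nonvanishing P Q \<and> skew_symmetric P Q \<and> on_bbar_b d \<beta> P Q
             \<and> bounded_by T W P Q \<and> tab_degree P = 2 * m}
    {\<theta>s. std_monomial d \<alpha> \<beta> \<gamma> \<theta>s \<and> monomial_degree \<beta> \<theta>s = m}"
proof -
  note B = assms(2)
  note ch = char[OF B assms(1) assms(3) assms(6) assms(7)]
  let ?A = "{(P, Q). nonvanishing P Q \<and> skew_symmetric P Q \<and> on_bbar_b d \<beta> P Q
             \<and> bounded_by T W P Q \<and> tab_degree P = 2 * m}"
  let ?C = "{\<theta>s. std_monomial d \<alpha> \<beta> \<gamma> \<theta>s \<and> monomial_degree \<beta> \<theta>s = m}"
  let ?g = "\<lambda>\<theta>s. (map (pf \<beta>) \<theta>s, map (qf \<beta>) \<theta>s)"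
  show ?thesis
  proof (rule bij_betw_byWitness[where f' = ?g])
    show "\<forall>a\<in>?A. ?g (tab_to_monomial \<beta> a) = a"
    proof
      fix a assume "a \<in> ?A"
      then obtain P Q where a: "a = (P, Q)" and h: "skew_symmetric P Q" "on_bbar_b d \<beta> P Q" by auto
      have ag: "allgood d \<beta> P Q" using dom_allgood[OF B h] .
      show "?g (tab_to_monomial \<beta> a) = a" using ch(7,8)[OF ag] a by simp
    qed
    show "\<forall>a'\<in>?C. tab_to_monomial \<beta> (?g a') = a'"
      using cod_good(2)[OF B] unfolding std_monomial_def by blast
    show "tab_to_monomial \<beta> ` ?A \<subseteq> ?C"
    proof
      fix x assume "x \<in> tab_to_monomial \<beta> ` ?A"
      then obtain P Q where x: "x = tab_to_monomial \<beta> (P, Q)" and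
        h: "nonvanishing P Q" "skew_symmetric P Q" "on_bbar_b d \<beta> P Q"
           "bounded_by T W P Q" "tab_degree P = 2 * m" by auto
      have ag: "allgood d \<beta> P Q" using dom_allgood[OF B h(2,3)] .
      note c = ch[OF ag]
      have "std_monomial d \<alpha> \<beta> \<gamma> x" unfolding std_monomial_def x
        using c(1,2,4,6) h by blast
      moreover have "monomial_degree \<beta> x = m" using c(5) h(5) x by simp
      ultimately show "x \<in> ?C" by simp
    qed
    show "?g ` ?C \<subseteq> ?A"
    proof
      fix y assume "y \<in> ?g ` ?C"
      then obtain \<theta>s where y: "y = ?g \<theta>s" and s: "std_monomial d \<alpha> \<beta> \<gamma> \<theta>s" and dg: "monomial_degree \<beta> \<theta>s = m"
        by auto
      have th: "\<forall>\<theta>\<in>set \<theta>s. \<theta> \<in> Iset d \<and> (Ilt \<theta> \<beta> \<or> Ilt \<beta> \<theta>)" using s unfolding std_monomial_def by blast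
      note ag = cod_good(1)[OF B th] and tt = cod_good(2)[OF B th]
      note c = ch[OF ag, unfolded tt]
      have "nonvanishing (map (pf \<beta>) \<theta>s) (map (qf \<beta>) \<theta>s)" using c(1) th by blast
      moreover have "skew_symmetric (map (pf \<beta>) \<theta>s) (map (qf \<beta>) \<theta>s)"
        using c(2) s unfolding std_monomial_def by blast
      moreover have "bounded_by T W (map (pf \<beta>) \<theta>s) (map (qf \<beta>) \<theta>s)"
        using c(4) s unfolding std_monomial_def by blast
      moreover have "tab_degree (map (pf \<beta>) \<theta>s) = 2 * m" using c(5) dg by simp
      ultimately show "y \<in> ?A" using c(3) y by simp
    qed
  qed
qed

end
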